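(* Let $s\in\{+1,-1\}$ and let $(X,d,\lambda)$ be an admissible space, with orthonormal basis $\{\varphi_n\}_{n\in\mathbb N}$ of $L^2(X)$ and point $\mathfrak o\in X$ as in the definition of admissibility. Then for every nonzero $f\in\mathcal A_s(X)$, $$\lambda(\{x\in X: f(x)<0\})\sum_{n\ge 0:\ s\widehat f(n)<0}\|\varphi_n\|_{L^\infty(X)}^2\ \ge\ \frac1{16}.$$ In particular, $$\lambda\big(B(\mathfrak o, r(f;X))\big)\sum_{n=0}^{k(s\widehat f)-1}\|\varphi_n\|_{L^\infty(X)}^2\ \ge\ \frac1{16}.$$
   Context: $(X,d,\lambda)$ is a metric measure space with distance $d$ and probability measure $\lambda$; $L^2(X)$ denotes square-integrable real-valued functions; $B(x,r)=\{y\in X: d(x,y)\le r\}$; $\mathbb N=\{0,1,2,\dots\}$. The space is admissible if there exist an orthonormal basis $\{\varphi_n:X\to\mathbb R\}_{n\in\mathbb N}$ of $L^2(X)$ and a point $\mathfrak o\in X$ such that $\varphi_0\equiv1$ and, for every $n$, $\varphi_n(\mathfrak o):=\lim_{r\to0^+}\frac{1}{\lambda(B(\mathfrak o,r))}\int_{B(\mathfrak o,r)}\varphi_n\,d\lambda$ exists and equals $\|\varphi_n\|_{L^\infty(X)}<\infty$. For $f\in L^2(X)$ write $\widehat f(n)=\int_X f\varphi_n\,d\lambda$. For $s\in\{+1,-1\}$, $\mathcal A_s(X)$ is the set of real-valued $f\in L^2(X)$ such that $\sum_{n}|\widehat f(n)|\,\|\varphi_n\|_{L^\infty(X)}<\infty$,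 $\widehat f(0)\le 0$, the sequence $\{s\widehat f(n)\}_n$ is eventually nonnegative, and $sf(\mathfrak o)\le 0$, where $f(\mathfrak o):=\sum_n\widehat f(n)\varphi_n(\mathfrak o)$. Write $r_1\sim r_2$ if $\lambda(B(\mathfrak o,r_1))=\lambda(B(\mathfrak o,r_2))$; let $\mathcal R$ be the set of infima of the equivalence classes of $[0,\infty)$ under $\sim$. Define $r(f;X)=\inf\{r\in\mathcal R: f(x)\ge0\text{ for }\lambda\text{-a.e. }x\text{ with }d(x,\mathfrak o)\ge r\}$ and $k(s\widehat f)=\min\{k\ge1: s\widehat f(n)\ge0\text{ for all }n\ge k\}$. *)

theory Defs
  imports "HOL-Probability.Probability"
begin

definition linf_norm_e :: "'a measure \<Rightarrow> ('a \<Rightarrow> real) \<Rightarrow> ereal" where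
  "linf_norm_e M g = esssup M (\<lambda>x. ereal \<bar>g x\<bar>)"

definition linf_norm :: "'a measure \<Rightarrow> ('a \<Rightarrow> real) \<Rightarrow> real" where
  "linf_norm M g = real_of_ereal (linf_norm_e M g)"

definition L2 :: "'a measure \<Rightarrow> ('a \<Rightarrow> real) set" where
  "L2 M = {f. f \<in> borel_measurable M \<and> integrable M (\<lambda>x. (f x)\<^sup>2)}"

definition fcoef :: "'a measure \<Rightarrow> (nat \<Rightarrow> 'a \<Rightarrow> real) \<Rightarrow> ('a \<Rightarrow> real) \<Rightarrow> nat \<Rightarrow> real" where
  "fcoef M \<phi> f n = (\<integral>x. f x * \<phi> n x \<partial>M)"

definition ONB :: "'a measure \<Rightarrow> (nat \<Rightarrow> 'a \<Rightarrow> real) \<Rightarrow> bool" where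
  "ONB M \<phi> \<longleftrightarrow>
     (\<forall>n. \<phi> n \<in> L2 M) \<and>
     (\<forall>n m. (\<integral>x. \<phi> n x * \<phi> m x \<partial>M) = (if n = m then 1 else 0)) \<and>
     (\<forall>f\<in>L2 M. (\<lambda>N. \<integral>x. (f x - (\<Sum>n<N. fcoef M \<phi> f n * \<phi> n x))\<^sup>2 \<partial>M)
                    \<longlonglongrightarrow> 0)"

definition ball_avg :: "'a::metric_space measure \<Rightarrow> 'a \<Rightarrow> ('a \<Rightarrow> real) \<Rightarrow> real \<Rightarrow> real" where
  "ball_avg M pt g r = (1 / measure M (cball pt r)) * (\<integral>x\<in>cball pt r. g x \<partial>M)"

definition val_at :: "'a::metric_space measure \<Rightarrow> 'a \<Rightarrow> ('a \<Rightarrow> real) \<Rightarrow> real" where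
  "val_at M pt g = Lim (at_right 0) (ball_avg M pt g)"

(* admissibility of (X,d,\<lambda>) with basis \<phi> and point pt; X is the whole type,
   \<lambda> = M a Borel probability measure *)
definition admissible :: "'a::metric_space measure \<Rightarrow> (nat \<Rightarrow> 'a \<Rightarrow> real) \<Rightarrow> 'a \<Rightarrow> bool" where
  "admissible M \<phi> pt \<longleftrightarrow>
     prob_space M \<and> sets M = sets borel \<and> ONB M \<phi> \<and>
     (AE x in M. \<phi> 0 x = 1) \<and>
     (\<forall>n. linf_norm_e M (\<phi> n) < \<infinity> \<and>
          (ball_avg M pt (\<phi> n) \<longlongrightarrow> linf_norm M (\<phi> n)) (at_right 0))"

definition fval_o :: "'a::metric_space measure \<Rightarrow> (nat \<Rightarrow> 'a \<Rightarrow> real) \<Rightarrow> 'a \<Rightarrow> ('a \<Rightarrow> real) \<Rightarrow> real" where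
  "fval_o M \<phi> pt f = (\<Sum>n. fcoef M \<phi> f n * val_at M pt (\<phi> n))"

definition A_s :: "real \<Rightarrow> 'a::metric_space measure \<Rightarrow> (nat \<Rightarrow> 'a \<Rightarrow> real) \<Rightarrow> 'a \<Rightarrow> ('a \<Rightarrow> real) set" where
  "A_s s M \<phi> pt = {f. f \<in> L2 M \<and>
       summable (\<lambda>n. \<bar>fcoef M \<phi> f n\<bar> * linf_norm M (\<phi> n)) \<and>
       fcoef M \<phi> f 0 \<le> 0 \<and>
       (\<forall>\<^sub>F n in sequentially. s * fcoef M \<phi> f n \<ge> 0) \<and>
       s * fval_o M \<phi> pt f \<le> 0}"

definition Rset :: "'a::metric_space measure \<Rightarrow> 'a \<Rightarrow> real set" where
  "Rset M pt = {Inf {r'. r' \<ge> 0 \<and> measure M (cball pt r') = measure M (cball pt r)} | r. r \<ge> 0}"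

(* r(f;X), as an extended real (inf of the empty set = \<infinity>) *)
definition r_f :: "'a::metric_space measure \<Rightarrow> 'a \<Rightarrow> ('a \<Rightarrow> real) \<Rightarrow> ereal" where
  "r_f M pt f = Inf {ereal r | r. r \<in> Rset M pt \<and> (AE x in M. dist x pt \<ge> r \<longrightarrow> f x \<ge> 0)}"

definition ball_meas :: "'a::metric_space measure \<Rightarrow> 'a \<Rightarrow> ereal \<Rightarrow> real" where
  "ball_meas M pt r = (if r = \<infinity> then measure M (space M) else measure M (cball pt (real_of_ereal r)))"

definition k_idx :: "(nat \<Rightarrow> real) \<Rightarrow> nat" where
  "k_idx a = (LEAST k. k \<ge> 1 \<and> (\<forall>n\<ge>k. a n \<ge> 0))"

end

theory Submission
  imports Defs
begin


lemma adm_basic: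
  assumes "admissible M \<phi> pt"
  shows "prob_space M" "\<And>n. \<phi> n \<in> borel_measurable M" "\<And>n. linf_norm M (\<phi> n) \<ge> 0"
    "\<And>n. AE x in M. \<bar>\<phi> n x\<bar> \<le> linf_norm M (\<phi> n)"
    "\<And>n. val_at M pt (\<phi> n) = linf_norm M (\<phi> n)"
    "AE x in M. \<phi> 0 x = 1"
proof -
  show P: "prob_space M" using assms by (simp add: admissible_def)
  show meas: "\<And>n. \<phi> n \<in> borel_measurable M" using assms by (simp add: admissible_def ONB_def L2_def)
  show "AE x in M. \<phi> 0 x = 1" using assms by (simp add: admissible_def)
  fix n
  have fin: "linf_norm_e M (\<phi> n) < \<infinity>" using assms by (simp add: admissible_def)
  have "esssup M (\<lambda>x. 0::ereal) \<le> esssup M (\<lambda>x. ereal \<bar>\<phi> n x\<bar>)"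
    by (rule esssup_mono) auto
  moreover have "esssup M (\<lambda>x. 0::ereal) = 0"
    using P by (intro esssup_const) (simp add: prob_space.emeasure_space_1)
  ultimately have nn: "linf_norm_e M (\<phi> n) \<ge> 0" by (simp add: linf_norm_e_def)
  then have eq: "ereal (linf_norm M (\<phi> n)) = linf_norm_e M (\<phi> n)"
    using fin by (cases "linf_norm_e M (\<phi> n)") (auto simp: linf_norm_def)
  show "linf_norm M (\<phi> n) \<ge> 0" using nn fin by (simp add: linf_norm_def real_of_ereal_pos)
  have "AE x in M. ereal \<bar>\<phi> n x\<bar> \<le> linf_norm_e M (\<phi> n)"
    unfolding linf_norm_e_def by (rule esssup_AE)
  then show "AE x in M. \<bar>\<phi> n x\<bar> \<le> linf_norm M (\<phi> n)"
    by eventually_elim (simp add: eq[symmetric])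
  have "(ball_avg M pt (\<phi> n) \<longlongrightarrow> linf_norm M (\<phi> n)) (at_right 0)"
    using assms by (simp add: admissible_def)
  then show "val_at M pt (\<phi> n) = linf_norm M (\<phi> n)"
    unfolding val_at_def by (intro tendsto_Lim) auto
qed



lemma f_bound:
  assumes adm: "admissible M \<phi> pt" and fL2: "f \<in> L2 M"
    and sm: "summable (\<lambda>n. \<bar>fcoef M \<phi> f n\<bar> * linf_norm M (\<phi> n))"
  shows "AE x in M. \<bar>f x\<bar> \<le> (\<Sum>n. \<bar>fcoef M \<phi> f n\<bar> * linf_norm M (\<phi> n))"
proof -
  define c where "c = fcoef M \<phi> f"
  define L where "L n = linf_norm M (\<phi> n)" for n
  define K where "K = (\<Sum>n. \<bar>c n\<bar> * L n)"
  define S where "S N x = (\<Sum>n<N. c n * \<phi> n x)" for N x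
  define h where "h x = max (\<bar>f x\<bar> - K) 0" for x
  interpret prob_space M using adm_basic[OF adm] by simp
  have meas[measurable]: "\<phi> n \<in> borel_measurable M" for n using adm_basic[OF adm] by simp
  have fm[measurable]: "f \<in> borel_measurable M" and f2: "integrable M (\<lambda>x. (f x)\<^sup>2)"
    using fL2 by (auto simp: L2_def)
  have Lnn: "L n \<ge> 0" for n using adm_basic[OF adm] by (simp add: L_def)
  have sm': "summable (\<lambda>n. \<bar>c n\<bar> * L n)" using sm by (simp add: c_def L_def)
  have Knn: "K \<ge> 0" unfolding K_def using sm' Lnn by (intro suminf_nonneg) auto
  have AEall: "AE x in M. \<forall>n. \<bar>\<phi> n x\<bar> \<le> L n"
    using adm_basic(4)[OF adm] by (simp add: AE_all_countable L_def)
  have bnd: "AE x in M. \<forall>N. \<bar>S N x\<bar> \<le> K"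
    using AEall
  proof eventually_elim
    case (elim x)
    show ?case
    proof
      fix N
      have "\<bar>S N x\<bar> \<le> (\<Sum>n<N. \<bar>c n * \<phi> n x\<bar>)" unfolding S_def by (rule sum_abs)
      also have "\<dots> \<le> (\<Sum>n<N. \<bar>c n\<bar> * L n)"
        using elim by (intro sum_mono) (simp add: abs_mult mult_left_mono)
      also have "\<dots> \<le> K" unfolding K_def
        using sm' Lnn by (intro sum_le_suminf) auto
      finally show "\<bar>S N x\<bar> \<le> K" .
    qed
  qed
  have Sm[measurable]: "S N \<in> borel_measurable M" for N unfolding S_def by measurable
  have hm[measurable]: "h \<in> borel_measurable M" unfolding h_def by measurable
  have h2int: "integrable M (\<lambda>x. (h x)\<^sup>2)"
  proof (rule Bochner_Integration.integrable_bound[OF f2])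
    show "(\<lambda>x. (h x)\<^sup>2) \<in> borel_measurable M" by measurable
    show "AE x in M. norm ((h x)\<^sup>2) \<le> norm ((f x)\<^sup>2)"
    proof (rule AE_I2)
      fix x
      have "0 \<le> h x" "h x \<le> \<bar>f x\<bar>" using Knn by (auto simp: h_def)
      then have "(h x)\<^sup>2 \<le> (f x)\<^sup>2" by (metis abs_le_square_iff abs_of_nonneg)
      then show "norm ((h x)\<^sup>2) \<le> norm ((f x)\<^sup>2)" by simp
    qed
  qed
  have dint: "integrable M (\<lambda>x. (f x - S N x)\<^sup>2)" for N
  proof (rule Bochner_Integration.integrable_bound)
    show "integrable M (\<lambda>x. 2 * (f x)\<^sup>2 + 2 * K\<^sup>2)" using f2 by auto
    show "(\<lambda>x. (f x - S N x)\<^sup>2) \<in> borel_measurable M" by measurable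
    show "AE x in M. norm ((f x - S N x)\<^sup>2) \<le> norm (2 * (f x)\<^sup>2 + 2 * K\<^sup>2)"
      using bnd
    proof eventually_elim
      case (elim x)
      have a: "\<bar>S N x\<bar> \<le> K" using elim by blast
      have "(S N x)\<^sup>2 \<le> K\<^sup>2" using a by (metis abs_le_square_iff abs_of_nonneg Knn)
      moreover have "(f x - S N x)\<^sup>2 \<le> 2 * (f x)\<^sup>2 + 2 * (S N x)\<^sup>2"
        by (smt (verit) sum_squares_ge_zero power2_diff zero_le_power2 power2_sum)
      ultimately show ?case by simp
    qed
  qed
  have le: "(\<integral>x. (h x)\<^sup>2 \<partial>M) \<le> (\<integral>x. (f x - S N x)\<^sup>2 \<partial>M)" for N
  proof (rule integral_mono_AE[OF h2int dint])
    show "AE x in M. (h x)\<^sup>2 \<le> (f x - S N x)\<^sup>2"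
      using bnd
    proof eventually_elim
      case (elim x)
      have a: "\<bar>S N x\<bar> \<le> K" using elim by blast
      have "h x \<le> \<bar>f x - S N x\<bar>" "0 \<le> h x" using a by (auto simp: h_def)
      then show ?case by (metis abs_le_square_iff abs_of_nonneg)
    qed
  qed
  have lim: "(\<lambda>N. \<integral>x. (f x - S N x)\<^sup>2 \<partial>M) \<longlonglongrightarrow> 0"
    using adm fL2 by (auto simp: admissible_def ONB_def S_def c_def)
  have "(\<integral>x. (h x)\<^sup>2 \<partial>M) \<le> 0"
    using lim le by (intro LIMSEQ_le_const) auto
  moreover have "(\<integral>x. (h x)\<^sup>2 \<partial>M) \<ge> 0" by simp
  ultimately have "(\<integral>x. (h x)\<^sup>2 \<partial>M) = 0" by linarith
  then have "AE x in M. (h x)\<^sup>2 = 0"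
    using integral_nonneg_eq_0_iff_AE[OF h2int] by simp
  then show ?thesis
    by eventually_elim (auto simp: h_def K_def c_def L_def)
qed



lemma part1:
  fixes M :: "'a::metric_space measure"
  assumes s: "s = 1 \<or> s = -1" and adm: "admissible M \<phi> pt"
    and fA: "f \<in> A_s s M \<phi> pt" and nz: "\<not> (AE x in M. f x = 0)"
  shows "finite {n. s * fcoef M \<phi> f n < 0}"
    "measure M {x \<in> space M. f x < 0}
           * (\<Sum>n\<in>{n. s * fcoef M \<phi> f n < 0}. (linf_norm M (\<phi> n))\<^sup>2) \<ge> 1/4"
proof -
  define c where "c = fcoef M \<phi> f"
  define L where "L n = linf_norm M (\<phi> n)" for n
  define K where "K = (\<Sum>n. \<bar>c n\<bar> * L n)"
  define N where "N = {n. s * c n < 0}"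
  define A where "A = {x \<in> space M. f x < 0}"
  define m where "m = measure M A"
  define S where "S = (\<Sum>n\<in>N. (L n)\<^sup>2)"
  define I where "I = (\<integral>x. \<bar>f x\<bar> \<partial>M)"
  define fm where "fm x = max (- f x) 0" for x
  interpret prob_space M using adm_basic[OF adm] by simp
  have meas[measurable]: "\<phi> n \<in> borel_measurable M" for n using adm_basic[OF adm] by simp
  have fL2: "f \<in> L2 M" using fA by (simp add: A_s_def)
  have fm'[measurable]: "f \<in> borel_measurable M" and f2: "integrable M (\<lambda>x. (f x)\<^sup>2)"
    using fL2 by (auto simp: L2_def)
  have fint: "integrable M f" by (rule square_integrable_imp_integrable[OF fm' f2])
  have Lnn: "L n \<ge> 0" for n using adm_basic[OF adm] by (simp add: L_def)
  have AEL: "AE x in M. \<bar>\<phi> n x\<bar> \<le> L n" for n using adm_basic[OF adm] by (simp add: L_def)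
  have sm: "summable (\<lambda>n. \<bar>c n\<bar> * L n)" using fA by (simp add: A_s_def c_def L_def)
  have c0: "c 0 \<le> 0" using fA by (simp add: A_s_def c_def)
  have ev: "\<forall>\<^sub>F n in sequentially. s * c n \<ge> 0" using fA by (simp add: A_s_def c_def)
  have fo: "s * fval_o M \<phi> pt f \<le> 0" using fA by (simp add: A_s_def)
  have fbnd: "AE x in M. \<bar>f x\<bar> \<le> K"
    using f_bound[OF adm fL2] fA by (simp add: A_s_def K_def c_def L_def)
  have abs_s: "\<bar>s\<bar> = 1" using s by auto
  obtain M0 where M0: "\<And>n. n \<ge> M0 \<Longrightarrow> s * c n \<ge> 0" using ev by (auto simp: eventually_sequentially)
  have Nsub: "N \<subseteq> {..<M0}"
  proof
    fix n assume "n \<in> N"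
    then have "\<not> s * c n \<ge> 0" by (simp add: N_def)
    then show "n \<in> {..<M0}" using M0[of n] by (cases "n \<ge> M0") auto
  qed
  then have finN: "finite N" by (rule finite_subset) simp
  then show "finite {n. s * fcoef M \<phi> f n < 0}" by (simp add: N_def c_def)
  have "c 0 = (\<integral>x. f x \<partial>M)"
    unfolding c_def fcoef_def
    using adm_basic(6)[OF adm] by (intro integral_cong_AE) (auto elim!: eventually_mono)
  with c0 have intf: "(\<integral>x. f x \<partial>M) \<le> 0" by simp
  have cb: "\<bar>c n\<bar> \<le> I * L n" for n
  proof -
    have bi: "integrable M (\<lambda>x. \<bar>f x\<bar> * L n)" using fint by auto
    have pi: "integrable M (\<lambda>x. f x * \<phi> n x)"
    proof (rule Bochner_Integration.integrable_bound[OF bi])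
      show "(\<lambda>x. f x * \<phi> n x) \<in> borel_measurable M" by measurable
      show "AE x in M. norm (f x * \<phi> n x) \<le> norm (\<bar>f x\<bar> * L n)"
        using AEL[of n] by eventually_elim (simp add: abs_mult Lnn mult_left_mono)
    qed
    have "\<bar>c n\<bar> \<le> (\<integral>x. norm (f x * \<phi> n x) \<partial>M)"
      unfolding c_def fcoef_def using integral_norm_bound[of M "\<lambda>x. f x * \<phi> n x"] by simp
    also have "\<dots> \<le> (\<integral>x. \<bar>f x\<bar> * L n \<partial>M)"
    proof (rule integral_mono_AE[OF integrable_norm[OF pi] bi])
      show "AE x in M. norm (f x * \<phi> n x) \<le> \<bar>f x\<bar> * L n"
        using AEL[of n] by eventually_elim (simp add: abs_mult Lnn mult_left_mono)
    qed
    also have "\<dots> = I * L n" by (simp add: I_def)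
    finally show ?thesis .
  qed
  have fmint: "integrable M fm" unfolding fm_def using fint by auto
  have "I = (\<integral>x. f x + 2 * fm x \<partial>M)"
    unfolding I_def by (intro Bochner_Integration.integral_cong) (auto simp: fm_def)
  also have "\<dots> = (\<integral>x. f x \<partial>M) + 2 * (\<integral>x. fm x \<partial>M)"
    using fint fmint by simp
  finally have I2: "I \<le> 2 * (\<integral>x. fm x \<partial>M)" using intf by linarith
  have Am: "A \<in> sets M" unfolding A_def by measurable
  have "(\<integral>x. fm x \<partial>M) \<le> (\<integral>x. K * indicator A x \<partial>M)"
  proof (rule integral_mono_AE[OF fmint])
    show "integrable M (\<lambda>x. K * indicator A x)" using Am
      by (intro integrable_mult_right) (simp add: integrable_indicator_iff emeasure_eq_measure)
    show "AE x in M. fm x \<le> K * indicator A x"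
      using fbnd AE_space by eventually_elim (auto simp: fm_def A_def indicator_def)
  qed
  also have "\<dots> = K * m" using Am by (simp add: m_def Int_absorb2 sets.sets_into_space)
  finally have fmK: "(\<integral>x. fm x \<partial>M) \<le> K * m" .
  define CN where "CN = (\<Sum>n\<in>N. \<bar>c n\<bar> * L n)"
  have val: "val_at M pt (\<phi> n) = L n" for n using adm_basic[OF adm] by (simp add: L_def)
  have smc: "summable (\<lambda>n. c n * L n)"
    by (rule summable_rabs_cancel) (use sm Lnn in \<open>simp add: abs_mult\<close>)
  define b where "b n = s * (c n * L n)" for n
  have fob: "(\<Sum>n. b n) \<le> 0"
    using fo smc unfolding b_def fval_o_def by (simp add: val suminf_mult c_def)
  have smb: "summable b" unfolding b_def using smc by (rule summable_mult)
  define ng where "ng n = (if n \<in> N then \<bar>c n\<bar> * L n else 0)" for n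
  have ngs: "ng sums CN" unfolding ng_def CN_def using finN by (rule sums_If_finite_set)
  have absb: "\<bar>c n\<bar> * L n = b n + 2 * ng n" for n
  proof (cases "s = 1")
    case True then show ?thesis using Lnn[of n]
      by (auto simp: b_def ng_def N_def abs_if)
  next
    case False then have "s = -1" using s by auto
    then show ?thesis using Lnn[of n]
      by (auto simp: b_def ng_def N_def abs_if)
  qed
  have "K = (\<Sum>n. b n + 2 * ng n)" unfolding K_def using absb by simp
  also have "\<dots> = (\<Sum>n. b n) + 2 * CN"
    using smb ngs by (simp add: suminf_add[symmetric] sums_summable suminf_mult sums_unique[symmetric])
  finally have KC: "K \<le> 2 * CN" using fob by linarith
  have "CN \<le> (\<Sum>n\<in>N. I * L n * L n)"
    unfolding CN_def using cb Lnn by (intro sum_mono mult_right_mono) auto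
  also have "\<dots> = I * S" by (simp add: S_def sum_distrib_left power2_eq_square mult.assoc)
  finally have CS: "CN \<le> I * S" .
  have Snn: "S \<ge> 0" unfolding S_def by (simp add: sum_nonneg)
  have "K \<le> 4 * (K * m) * S"
  proof -
    have "K \<le> 2 * (I * S)" using KC CS by linarith
    also have "\<dots> \<le> 2 * (2 * (K * m) * S)"
      using I2 fmK Snn by (intro mult_left_mono mult_right_mono) auto
    finally show ?thesis by simp
  qed
  moreover have "K > 0"
  proof (rule ccontr)
    assume nk: "\<not> K > 0"
    from fbnd have "AE x in M. f x = 0" by eventually_elim (use nk in auto)
    with nz show False by simp
  qed
  ultimately have "1 \<le> 4 * m * S" by (simp add: field_simps)
  then show "measure M {x \<in> space M. f x < 0}
           * (\<Sum>n\<in>{n. s * fcoef M \<phi> f n < 0}. (linf_norm M (\<phi> n))\<^sup>2) \<ge> 1/4"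
    by (simp add: m_def A_def S_def N_def c_def L_def)
qed



lemma ball_meas_ge:
  fixes M :: "'a::metric_space measure"
  assumes adm: "admissible M \<phi> pt"
    and fm[measurable]: "f \<in> borel_measurable M"
  shows "measure M {x \<in> space M. f x < 0} \<le> ball_meas M pt (r_f M pt f)"
proof -
  interpret prob_space M using adm_basic[OF adm] by simp
  have sets: "sets M = sets borel" using adm by (simp add: admissible_def)
  have cb[measurable]: "cball p r \<in> sets M" for p r unfolding sets by (simp add: borel_closed)
  define A where "A = {x \<in> space M. f x < 0}"
  define R where "R = {r. r \<in> Rset M pt \<and> (AE x in M. dist x pt \<ge> r \<longrightarrow> f x \<ge> 0)}"
  have rf: "r_f M pt f = Inf (ereal ` R)" unfolding r_f_def R_def
    by (rule arg_cong[where f=Inf]) auto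
  have Rnn: "r \<ge> 0" if "r \<in> R" for r
  proof -
    from that obtain r0 where r0: "r0 \<ge> 0"
      "r = Inf {r'. r' \<ge> 0 \<and> measure M (cball pt r') = measure M (cball pt r0)}"
      by (auto simp: R_def Rset_def)
    show ?thesis unfolding r0(2) by (rule cInf_greatest) (use r0(1) in auto)
  qed
  have key: "measure M A \<le> measure M (cball pt r)" if "r \<in> R" for r
  proof (rule finite_measure_mono_AE[OF _ cb])
    have "AE x in M. dist x pt \<ge> r \<longrightarrow> f x \<ge> 0" using that by (simp add: R_def)
    then show "AE x in M. x \<in> A \<longrightarrow> x \<in> cball pt r"
      by eventually_elim (auto simp: A_def dist_commute)
  qed
  show ?thesis
  proof (cases "R = {}")
    case True
    then have "r_f M pt f = \<infinity>" by (simp add: rf top_ereal_def)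
    then show ?thesis by (simp add: ball_meas_def bounded_measure)
  next
    case False
    have bdd: "bdd_below R" using Rnn by (intro bdd_belowI[of _ 0]) auto
    define \<rho> where "\<rho> = Inf R"
    have "r_f M pt f = ereal \<rho>" unfolding rf \<rho>_def by (rule ereal_Inf'[OF bdd False, symmetric])
    then have bm: "ball_meas M pt (r_f M pt f) = measure M (cball pt \<rho>)"
      by (simp add: ball_meas_def)
    define B where "B k = cball pt (\<rho> + 1 / (Suc k))" for k :: nat
    have le: "measure M A \<le> measure M (B k)" for k
    proof -
      have "\<rho> < \<rho> + 1 / Suc k" by simp
      then obtain r where r: "r \<in> R" "r < \<rho> + 1 / Suc k"
        using cInf_lessD[OF False] unfolding \<rho>_def by blast
      have "measure M A \<le> measure M (cball pt r)" by (rule key[OF r(1)])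
      also have "\<dots> \<le> measure M (B k)" unfolding B_def
        using r(2) by (intro finite_measure_mono) auto
      finally show ?thesis .
    qed
    have dec: "decseq B" unfolding B_def decseq_def
    proof (intro allI impI subsetI)
      fix m n :: nat and x assume mn: "m \<le> n" and x: "x \<in> cball pt (\<rho> + 1 / real (Suc n))"
      have "1 / real (Suc n) \<le> 1 / real (Suc m)" using mn by (intro divide_left_mono) auto
      then show "x \<in> cball pt (\<rho> + 1 / real (Suc m))" using x by auto
    qed
    have inter: "(\<Inter>k. B k) = cball pt \<rho>"
    proof (intro equalityI subsetI)
      fix x assume x: "x \<in> (\<Inter>k. B k)"
      show "x \<in> cball pt \<rho>"
      proof (rule ccontr)
        assume "x \<notin> cball pt \<rho>"
        then have "dist pt x - \<rho> > 0" by simp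
        then obtain k where "inverse (real (Suc k)) < dist pt x - \<rho>"
          using reals_Archimedean by blast
        moreover have "x \<in> B k" using x by blast
        ultimately show False by (simp add: B_def field_simps)
      qed
    next
      fix x assume "x \<in> cball pt \<rho>"
      then show "x \<in> (\<Inter>k. B k)" unfolding B_def
        by auto (smt (verit) of_nat_0_le_iff divide_nonneg_nonneg)
    qed
    have "(\<lambda>k. measure M (B k)) \<longlonglongrightarrow> measure M (cball pt \<rho>)"
    proof -
      have "range B \<subseteq> sets M" unfolding B_def using cb by blast
      from finite_Lim_measure_decseq[OF this dec] show ?thesis by (simp only: inter)
    qed
    then have "measure M A \<le> measure M (cball pt \<rho>)"
      using le by (intro LIMSEQ_le_const) auto
    then show ?thesis using bm by (simp add: A_def)
  qed
qed

theorem mainTheorem2: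
  fixes M :: "'a::metric_space measure" and \<phi> :: "nat \<Rightarrow> 'a \<Rightarrow> real"
    and pt :: 'a and s :: real and f :: "'a \<Rightarrow> real"
  assumes "s = 1 \<or> s = -1"
    and "admissible M \<phi> pt"
    and "f \<in> A_s s M \<phi> pt"
    and "\<not> (AE x in M. f x = 0)"
  shows "measure M {x \<in> space M. f x < 0}
           * (\<Sum>n\<in>{n. s * fcoef M \<phi> f n < 0}. (linf_norm M (\<phi> n))\<^sup>2) \<ge> 1/16
       \<and> ball_meas M pt (r_f M pt f)
           * (\<Sum>n<k_idx (\<lambda>n. s * fcoef M \<phi> f n). (linf_norm M (\<phi> n))\<^sup>2) \<ge> 1/16"
proof -
  note P = part1[OF assms]
  define m where "m = measure M {x \<in> space M. f x < 0}"
  define N where "N = {n. s * fcoef M \<phi> f n < 0}"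
  define S where "S = (\<Sum>n\<in>N. (linf_norm M (\<phi> n))\<^sup>2)"
  define a where "a = (\<lambda>n. s * fcoef M \<phi> f n)"
  define k where "k = k_idx a"
  have h1: "m * S \<ge> 1/4" using P(2) by (simp add: m_def S_def N_def)
  have fm: "f \<in> borel_measurable M" using assms(3) by (simp add: A_s_def L2_def)
  have bm: "m \<le> ball_meas M pt (r_f M pt f)"
    unfolding m_def by (rule ball_meas_ge[OF assms(2) fm])
  have mnn: "m \<ge> 0" by (simp add: m_def)
  have ev: "\<forall>\<^sub>F n in sequentially. a n \<ge> 0" using assms(3) by (simp add: A_s_def a_def)
  obtain M0 where M0: "\<And>n. n \<ge> M0 \<Longrightarrow> a n \<ge> 0" using ev by (auto simp: eventually_sequentially)
  have ex: "Suc M0 \<ge> 1 \<and> (\<forall>n\<ge>Suc M0. a n \<ge> 0)" using M0 by auto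
  have kprop: "\<forall>n\<ge>k. a n \<ge> 0" unfolding k_def k_idx_def
    using LeastI_ex[of "\<lambda>k. k \<ge> 1 \<and> (\<forall>n\<ge>k. a n \<ge> 0)"] ex by blast
  have Nsub: "N \<subseteq> {..<k}"
  proof
    fix n assume "n \<in> N"
    then have "\<not> a n \<ge> 0" by (simp add: N_def a_def)
    then show "n \<in> {..<k}" using kprop by (cases "n \<ge> k") auto
  qed
  have SS: "S \<le> (\<Sum>n<k. (linf_norm M (\<phi> n))\<^sup>2)"
    unfolding S_def using Nsub by (intro sum_mono2) auto
  have Snn: "S \<ge> 0" unfolding S_def by (simp add: sum_nonneg)
  have "1/16 \<le> m * S" using h1 by simp
  also have "\<dots> \<le> ball_meas M pt (r_f M pt f) * (\<Sum>n<k. (linf_norm M (\<phi> n))\<^sup>2)"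
    using bm SS mnn Snn by (intro mult_mono) auto
  finally have "1/16 \<le> ball_meas M pt (r_f M pt f) * (\<Sum>n<k. (linf_norm M (\<phi> n))\<^sup>2)" .
  then show ?thesis using h1 by (simp add: m_def S_def N_def k_def a_def)
qed


end
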